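(* Let $\phi$ be an even function in $\mathcal{S}$ with $\int_{-\infty}^\infty\phi(x)\,dx=1$. For $k\in\mathbb{N}$ and $c\in\mathbb{R}$ define $\phi_{k,c}(x)=k\phi(k(x-c))$. Then for every $f\in SG(\mathbb{R})$ and every $c\in\mathbb{R}$, $$f(c)=\lim_{k\to\infty}\int_{-\infty}^\infty f(x)\phi_{k,c}(x)\,dx.$$
   Context: A function $f:\mathbb{R}\to\mathbb{C}$ is piecewise continuous if on each bounded subinterval it is continuous except at finitely many points, at which it has finite one-sided limits. $PC_{bj}$ is the set of piecewise continuous $f:\mathbb{R}\to\mathbb{C}$ satisfying $f(x)=\tfrac12\big(f(x+)+f(x-)\big)$ for every $x$. $SG(\mathbb{R})$ is the set of $f\in PC_{bj}$ for which there exist $C>0$, $N\in\mathbb{N}$ with $\int_{-R}^{R}|f|\le C(1+R)^N$ for all $R>0$. $\mathcal{S}$ is the set of infinitely differentiable $\phi:\mathbb{R}\to\mathbb{C}$ with $\lim_{x\to\pm\infty}x^m\phi^{(n)}(x)=0$ for all integers $m,n\ge0$. *)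

theory Defs
  imports "HOL-Analysis.Analysis"
begin

definition piecewise_continuous :: "(real \<Rightarrow> complex) \<Rightarrow> bool" where
  "piecewise_continuous f \<longleftrightarrow>
     (\<forall>a b. \<exists>D. finite D \<and> (\<forall>x\<in>{a..b} - D. isCont f x) \<and>
        (\<forall>x\<in>D. (\<exists>l. (f \<longlongrightarrow> l) (at_left x)) \<and> (\<exists>l. (f \<longlongrightarrow> l) (at_right x))))"

definition PC_bj :: "(real \<Rightarrow> complex) set" where
  "PC_bj = {f. piecewise_continuous f \<and>
     (\<forall>x. f x = (Lim (at_right x) f + Lim (at_left x) f) / 2)}"

definition SG :: "(real \<Rightarrow> complex) set" where
  "SG = {f \<in> PC_bj. \<exists>C::real. \<exists>N::nat. C > 0 \<and>
     (\<forall>R>0. integral {-R..R} (\<lambda>x. norm (f x)) \<le> C * (1 + R) ^ N)}"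

definition vderiv_n :: "nat \<Rightarrow> (real \<Rightarrow> complex) \<Rightarrow> real \<Rightarrow> complex" where
  "vderiv_n n f = ((\<lambda>g x. vector_derivative g (at x)) ^^ n) f"

definition schwartz :: "(real \<Rightarrow> complex) set" where
  "schwartz = {\<phi>. (\<forall>n x. vderiv_n n \<phi> differentiable (at x)) \<and>
     (\<forall>m n. ((\<lambda>x. x ^ m *\<^sub>R vderiv_n n \<phi> x) \<longlongrightarrow> 0) at_top \<and>
            ((\<lambda>x. x ^ m *\<^sub>R vderiv_n n \<phi> x) \<longlongrightarrow> 0) at_bot)}"

end

theory Submission
  imports Defs
begin


lemma schwartz_cont:
  assumes "\<phi> \<in> schwartz"
  shows "continuous_on UNIV \<phi>"
proof -
  have "\<And>x. vderiv_n 0 \<phi> differentiable (at x)" using assms unfolding schwartz_def by blast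
  then have "\<And>x. \<phi> differentiable (at x)" by (simp add: vderiv_n_def)
  then show ?thesis
    by (simp add: continuous_at_imp_continuous_on differentiable_imp_continuous_within)
qed

lemma schwartz_decay:
  assumes "\<phi> \<in> schwartz"
  shows "\<exists>A. \<forall>x. norm (\<phi> x) \<le> A / (1 + \<bar>x\<bar>) ^ M"
proof -
  define g where "g x = norm (\<phi> x) + norm (x ^ M *\<^sub>R \<phi> x)" for x
  have v0: "vderiv_n 0 \<phi> = \<phi>" by (simp add: vderiv_n_def)
  have t0: "((\<lambda>x. x ^ 0 *\<^sub>R \<phi> x) \<longlongrightarrow> 0) at_top" "((\<lambda>x. x ^ 0 *\<^sub>R \<phi> x) \<longlongrightarrow> 0) at_bot"
   "((\<lambda>x. x ^ M *\<^sub>R \<phi> x) \<longlongrightarrow> 0) at_top" "((\<lambda>x. x ^ M *\<^sub>R \<phi> x) \<longlongrightarrow> 0) at_bot"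
  proof -
    have "\<forall>m. ((\<lambda>x. x ^ m *\<^sub>R vderiv_n 0 \<phi> x) \<longlongrightarrow> 0) at_top \<and> ((\<lambda>x. x ^ m *\<^sub>R vderiv_n 0 \<phi> x) \<longlongrightarrow> 0) at_bot"
      using assms unfolding schwartz_def by blast
    then show "((\<lambda>x. x ^ 0 *\<^sub>R \<phi> x) \<longlongrightarrow> 0) at_top" "((\<lambda>x. x ^ 0 *\<^sub>R \<phi> x) \<longlongrightarrow> 0) at_bot"
   "((\<lambda>x. x ^ M *\<^sub>R \<phi> x) \<longlongrightarrow> 0) at_top" "((\<lambda>x. x ^ M *\<^sub>R \<phi> x) \<longlongrightarrow> 0) at_bot"
      unfolding v0 by blast+
  qed
  have "(g \<longlongrightarrow> 0) at_top" unfolding g_def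
    using tendsto_add[OF tendsto_norm_zero[OF t0(1)] tendsto_norm_zero[OF t0(3)]] by simp
  then have "eventually (\<lambda>x. g x < 1) at_top" by (simp add: order_tendstoD(2))
  then obtain R1 where R1: "\<And>x. x \<ge> R1 \<Longrightarrow> g x < 1" by (auto simp: eventually_at_top_linorder)
  have "(g \<longlongrightarrow> 0) at_bot" unfolding g_def
    using tendsto_add[OF tendsto_norm_zero[OF t0(2)] tendsto_norm_zero[OF t0(4)]] by simp
  then have "eventually (\<lambda>x. g x < 1) at_bot" by (simp add: order_tendstoD(2))
  then obtain R2 where R2: "\<And>x. x \<le> R2 \<Longrightarrow> g x < 1" by (auto simp: eventually_at_bot_linorder)
  have cg: "continuous_on UNIV g" unfolding g_def
    using schwartz_cont[OF assms] by (intro continuous_intros) auto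
  have "compact (g ` {R2..R1})"
    by (rule compact_continuous_image) (use cg continuous_on_subset in auto)
  then obtain B where B: "\<And>x. x \<in> {R2..R1} \<Longrightarrow> norm (g x) \<le> B"
    using compact_imp_bounded bounded_iff by (metis imageI)
  have gB: "g x \<le> max 1 B" for x
  proof (cases "x \<in> {R2..R1}")
    case True then show ?thesis using B[of x] by auto
  next
    case False then show ?thesis using R1[of x] R2[of x] by force
  qed
  have pw: "(1 + \<bar>x\<bar>) ^ M \<le> 2 ^ M * (1 + \<bar>x\<bar> ^ M)" for x :: real
  proof (cases "\<bar>x\<bar> \<le> 1")
    case True
    then have "(1 + \<bar>x\<bar>) ^ M \<le> 2 ^ M" by (intro power_mono) auto
    moreover have "0 \<le> \<bar>x\<bar> ^ M * 2 ^ M" by simp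
    moreover have "2 ^ M * (1 + \<bar>x\<bar> ^ M) = 2 ^ M + \<bar>x\<bar> ^ M * (2::real) ^ M" by (simp add: algebra_simps)
    ultimately show ?thesis by linarith
  next
    case False
    then have "(1 + \<bar>x\<bar>) ^ M \<le> (2 * \<bar>x\<bar>) ^ M" by (intro power_mono) auto
    moreover have "(2 * \<bar>x\<bar>) ^ M = \<bar>x\<bar> ^ M * 2 ^ M" by (simp add: power_mult_distrib)
    moreover have "(0::real) \<le> 2 ^ M" by simp
    moreover have "2 ^ M * (1 + \<bar>x\<bar> ^ M) = 2 ^ M + \<bar>x\<bar> ^ M * (2::real) ^ M" by (simp add: algebra_simps)
    ultimately show ?thesis by linarith
  qed
  show ?thesis
  proof (intro exI allI)
    fix x :: real
    have "norm (\<phi> x) * (1 + \<bar>x\<bar>) ^ M \<le> norm (\<phi> x) * (2 ^ M * (1 + \<bar>x\<bar> ^ M))"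
      using pw by (intro mult_left_mono) auto
    also have "\<dots> = 2 ^ M * g x" by (simp add: g_def algebra_simps power_abs)
    also have "\<dots> \<le> 2 ^ M * max 1 B" using gB by (intro mult_left_mono) auto
    finally show "norm (\<phi> x) \<le> 2 ^ M * max 1 B / (1 + \<bar>x\<bar>) ^ M"
      by (simp add: pos_le_divide_eq)
  qed
qed




lemma sum_inv_sq_le: "(\<Sum>j<m. 1 / (1 + real j) ^ 2) \<le> 2 - 2 / (real m + 1)"
proof (induction m)
  case 0 then show ?case by simp
next
  case (Suc m)
  have e: "2 / (real m + 1) - 2 / (real m + 2) = 2 / ((real m + 1) * (real m + 2))"
    by (simp add: field_simps)
  have "0 \<le> real m * real m" by simp
  then have "1 / (1 + real m) ^ 2 \<le> 2 / ((real m + 1) * (real m + 2))"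
    by (simp add: divide_simps power2_eq_square algebra_simps)
  then have "1 / (1 + real m) ^ 2 \<le> 2 / (real m + 1) - 2 / (real m + 2)" using e by simp
  then show ?case using Suc by (simp add: add.commute)
qed

lemma weighted_integrable:
  fixes h :: "real \<Rightarrow> real"
  assumes h0: "\<And>x. 0 \<le> h x"
   and hi: "\<And>R. R > 0 \<Longrightarrow> h integrable_on {-R..R}"
   and hb: "\<And>R. R > 0 \<Longrightarrow> integral {-R..R} h \<le> C * (1+R)^N"
  shows "(\<lambda>x. h x / (1+\<bar>x\<bar>)^(N+2)) integrable_on UNIV"
proof -
  define w where "w x = 1 / (1+\<bar>x\<bar>)^(N+2)" for x :: real
  define c where "c j = 1 / (1 + real j)^(N+2)" for j :: nat
  define F where "F n x = (if x \<in> {-(real n+1)..real n+1} then h x * w x else 0)" for n x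
  have w0: "0 \<le> w x" "w x \<le> 1" for x
  proof -
    have "1 \<le> (1+\<bar>x\<bar>)^(N+2)" by (rule one_le_power) simp
    then show "0 \<le> w x" "w x \<le> 1" unfolding w_def by auto
  qed
  have C0: "C \<ge> 0"
  proof -
    have "0 \<le> integral {-1..1} h" using h0 hi[of 1] by (intro integral_nonneg) auto
    also have "\<dots> \<le> C * (1+1)^N" using hb[of 1] by simp
    finally have "0 \<le> C * (1+1) ^ N" .
    then have "0 \<le> C \<or> C \<le> 0 \<and> (2::real)^N \<le> 0" by (simp add: zero_le_mult_iff)
    moreover have "\<not> (2::real)^N \<le> 0" by (simp add: not_le)
    ultimately show ?thesis by blast
  qed
  have hw_int: "(\<lambda>x. h x * w x) integrable_on {-R..R}" if "R > 0" for R
  proof -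
    have "(\<lambda>x. w x * h x) absolutely_integrable_on {-R..R}"
    proof (rule absolutely_integrable_bounded_measurable_product_real)
      have "continuous_on {-R..R} w" unfolding w_def by (intro continuous_intros) auto
      then show "w \<in> borel_measurable (lebesgue_on {-R..R})"
        by (intro continuous_imp_measurable_on_sets_lebesgue) auto
      show "bounded (w ` {-R..R})" using w0 by (auto simp: bounded_iff intro!: exI[of _ 1])
      show "h absolutely_integrable_on {-R..R}"
        using hi[OF that] h0 by (intro nonnegative_absolutely_integrable_1) auto
    qed auto
    then show ?thesis by (simp add: absolutely_integrable_on_def mult.commute)
  qed
  have Fint: "F n integrable_on UNIV" for n
    unfolding F_def integrable_restrict_UNIV by (rule hw_int) simp
  have Fint_eq: "integral UNIV (F n) = integral {-(real n+1)..real n+1} (\<lambda>x. h x * w x)" for n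
    unfolding F_def by (rule integral_restrict_UNIV)
  have pt: "h x * w x \<le> (\<Sum>j<n+1. c j * (if x \<in> {-(real j+1)..real j+1} then h x else 0))"
    if x: "x \<in> {-(real n+1)..real n+1}" for n x
  proof -
    define j where "j = min n (nat \<lfloor>\<bar>x\<bar>\<rfloor>)"
    have j1: "real j \<le> \<bar>x\<bar>" unfolding j_def by linarith
    have j2: "\<bar>x\<bar> \<le> real j + 1" unfolding j_def using x by (auto simp: min_def)
    have jn: "j < n+1" unfolding j_def by simp
    have "w x \<le> c j" unfolding w_def c_def
      using j1 by (intro divide_left_mono power_mono mult_pos_pos) auto
    then have "h x * w x \<le> c j * (if x \<in> {-(real j+1)..real j+1} then h x else 0)"
      using j2 h0[of x] by (auto simp: mult.commute[of "c j"] intro: mult_left_mono)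
    also have "\<dots> \<le> (\<Sum>j<n+1. c j * (if x \<in> {-(real j+1)..real j+1} then h x else 0))"
      by (rule member_le_sum) (use jn h0 in \<open>auto simp: c_def\<close>)
    finally show ?thesis .
  qed
  have ibound: "integral UNIV (F n) \<le> 2 ^ (N+1) * C" for n
  proof -
    have ij: "(\<lambda>x. c j * (if x \<in> {-(real j+1)..real j+1} then h x else 0)) integrable_on {-(real n+1)..real n+1}"
      if "j < n+1" for j
    proof -
      have "{-(real j+1)..real j+1} \<inter> {-(real n+1)..real n+1} = {-(real j+1)..real j+1}"
        using that by auto
      then have "(\<lambda>x. (if x \<in> {-(real j+1)..real j+1} then h x else 0)) integrable_on {-(real n+1)..real n+1}"
        using hi[of "real j + 1"] by (simp only: integrable_restrict_Int)
      from integrable_cmul[OF this, where c="c j"] show ?thesis by simp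
    qed
    have "integral UNIV (F n) \<le> integral {-(real n+1)..real n+1}
             (\<lambda>x. \<Sum>j<n+1. c j * (if x \<in> {-(real j+1)..real j+1} then h x else 0))"
    proof -
      have isum: "(\<lambda>x. \<Sum>j<n+1. c j * (if x \<in> {-(real j+1)..real j+1} then h x else 0)) integrable_on {-(real n+1)..real n+1}"
        by (rule integrable_sum) (use ij in auto)
      show ?thesis unfolding Fint_eq
        by (rule integral_le[OF hw_int isum]) (use pt in auto)
    qed
    also have "\<dots> = (\<Sum>j<n+1. c j * integral {-(real j+1)..real j+1} h)"
    proof -
      have "integral {-(real n+1)..real n+1} (\<lambda>x. c j * (if x \<in> {-(real j+1)..real j+1} then h x else 0))
            = c j * integral {-(real j+1)..real j+1} h" if "j < n+1" for j
      proof -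
        have "{-(real j+1)..real j+1} \<inter> {-(real n+1)..real n+1} = {-(real j+1)..real j+1}"
          using that by auto
        then show ?thesis by (simp only: integral_mult_right integral_restrict_Int)
      qed
      note eqj = this
      have "integral {-(real n+1)..real n+1}
             (\<lambda>x. \<Sum>j<n+1. c j * (if x \<in> {-(real j+1)..real j+1} then h x else 0))
          = (\<Sum>j<n+1. integral {-(real n+1)..real n+1} (\<lambda>x. c j * (if x \<in> {-(real j+1)..real j+1} then h x else 0)))"
        by (rule integral_sum) (use ij in auto)
      also have "\<dots> = (\<Sum>j<n+1. c j * integral {-(real j+1)..real j+1} h)"
        by (rule sum.cong) (use eqj in auto)
      finally show ?thesis .
    qed
    also have "\<dots> \<le> (\<Sum>j<n+1. 2 ^ N * C * (1 / (1 + real j) ^ 2))"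
    proof (rule sum_mono)
      fix j assume "j \<in> {..<n+1}"
      have "c j * integral {-(real j+1)..real j+1} h \<le> c j * (C * (1 + (real j + 1)) ^ N)"
        using hb[of "real j + 1"] by (intro mult_left_mono) (auto simp: c_def)
      also have "\<dots> \<le> c j * (C * (2 * (1 + real j)) ^ N)"
        using C0 by (intro mult_left_mono power_mono) (auto simp: c_def)
      also have "\<dots> = 2 ^ N * C * (1 / (1 + real j) ^ 2)"
      proof -
        have p: "(1+real j)^(N+2) = (1+real j)^N * (1+real j)^2" by (simp add: power_add power2_eq_square)
        have "(1+real j)^N > 0" by simp
        then show ?thesis unfolding c_def p power_mult_distrib by (simp add: field_simps)
      qed
      finally show "c j * integral {-(real j+1)..real j+1} h \<le> 2 ^ N * C * (1 / (1 + real j) ^ 2)" .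
    qed
    also have "\<dots> = 2 ^ N * C * (\<Sum>j<n+1. 1 / (1 + real j) ^ 2)"
      by (simp only: sum_distrib_left)
    also have "\<dots> \<le> 2 ^ N * C * 2"
    proof -
      have "(\<Sum>j<n+1. 1 / (1 + real j) ^ 2) \<le> 2"
        using sum_inv_sq_le[of "n+1"] by (smt (verit) divide_nonneg_nonneg of_nat_0_le_iff)
      then show ?thesis using C0 by (intro mult_left_mono) auto
    qed
    finally show ?thesis by simp
  qed
  have "(\<lambda>x. h x * w x) integrable_on UNIV \<and>
        ((\<lambda>k. integral UNIV (F k)) \<longlongrightarrow> integral UNIV (\<lambda>x. h x * w x)) sequentially"
  proof (rule monotone_convergence_increasing)
    show "F k integrable_on UNIV" for k by (rule Fint)
    show "F k x \<le> F (Suc k) x" for k x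
      unfolding F_def using h0[of x] w0[of x] by auto
    show "(\<lambda>k. F k x) \<longlonglongrightarrow> h x * w x" for x
    proof (rule tendsto_eventually)
      show "\<forall>\<^sub>F k in sequentially. F k x = h x * w x"
      proof (rule eventually_sequentiallyI)
        fix k assume "k \<ge> nat \<lceil>\<bar>x\<bar>\<rceil>"
        then have "\<bar>x\<bar> \<le> real k" by linarith
        then show "F k x = h x * w x" unfolding F_def by auto
      qed
    qed
    show "bounded (range (\<lambda>k. integral UNIV (F k)))"
      unfolding bounded_iff
    proof (intro exI ballI)
      fix y assume "y \<in> range (\<lambda>k. integral UNIV (F k))"
      then obtain k where "y = integral UNIV (F k)" by auto
      moreover have "0 \<le> integral UNIV (F k)"
        using Fint h0 w0 by (intro integral_nonneg) (auto simp: F_def)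
      ultimately show "norm y \<le> 2 ^ (N+1) * C" using ibound[of k] by auto
    qed
  qed
  then show ?thesis unfolding w_def by simp
qed




lemma pc_local_bound:
  assumes "piecewise_continuous f"
  shows "\<exists>e>0. \<exists>B. \<forall>y. \<bar>y - x\<bar> < e \<longrightarrow> norm (f y) \<le> B"
proof -
  obtain D where D: "finite D" "\<forall>y\<in>{x..x} - D. isCont f y"
    "\<forall>y\<in>D. (\<exists>l. (f \<longlongrightarrow> l) (at_left y)) \<and> (\<exists>l. (f \<longlongrightarrow> l) (at_right y))"
    using assms unfolding piecewise_continuous_def by blast
  show ?thesis
  proof (cases "x \<in> D")
    case False
    then have "isCont f x" using D(2) by auto
    then have "eventually (\<lambda>y. dist (f y) (f x) < 1) (at x)"
      unfolding isCont_def by (simp add: tendstoD)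
    then obtain d where d: "d > 0" "\<And>y. y \<noteq> x \<Longrightarrow> dist y x < d \<Longrightarrow> dist (f y) (f x) < 1"
      unfolding eventually_at by auto
    show ?thesis
    proof (intro exI conjI allI impI)
      fix y assume "\<bar>y - x\<bar> < d"
      then have "dist (f y) (f x) \<le> 1" using d(2)[of y] by (cases "y = x") (auto simp: dist_real_def)
      then show "norm (f y) \<le> norm (f x) + 1" by (metis dist_norm norm_triangle_sub add.commute order_trans add_left_mono)
    qed (use d in auto)
  next
    case True
    then obtain l1 l2 where l1: "(f \<longlongrightarrow> l1) (at_left x)" and l2: "(f \<longlongrightarrow> l2) (at_right x)"
      using D(3) by blast
    have "eventually (\<lambda>y. dist (f y) l1 < 1) (at_left x)" using l1 by (simp add: tendstoD)
    then obtain b1 where b1: "b1 < x" "\<And>y. b1 < y \<Longrightarrow> y < x \<Longrightarrow> dist (f y) l1 < 1"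
      unfolding eventually_at_left_field by auto
    have "eventually (\<lambda>y. dist (f y) l2 < 1) (at_right x)" using l2 by (simp add: tendstoD)
    then obtain b2 where b2: "b2 > x" "\<And>y. x < y \<Longrightarrow> y < b2 \<Longrightarrow> dist (f y) l2 < 1"
      unfolding eventually_at_right_field by auto
    show ?thesis
    proof (intro exI conjI allI impI)
      show "min (x - b1) (b2 - x) > 0" using b1 b2 by auto
      fix y assume y: "\<bar>y - x\<bar> < min (x - b1) (b2 - x)"
      have nl: "norm (f y) \<le> norm l + 1" if "dist (f y) l < 1" for l
        using that by (metis dist_norm norm_triangle_sub add.commute order_trans add_left_mono less_imp_le)
      consider "y < x" | "y = x" | "y > x" by linarith
      then show "norm (f y) \<le> max (norm l1 + 1) (max (norm l2 + 1) (norm (f x)))"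
      proof cases
        case 1 then show ?thesis using y b1(2)[of y] nl[of l1] by auto
      next
        case 2 then show ?thesis by auto
      next
        case 3 then show ?thesis using y b2(2)[of y] nl[of l2] by auto
      qed
    qed
  qed
qed

lemma pc_bounded:
  assumes "piecewise_continuous f"
  shows "\<exists>B. \<forall>y\<in>{a..b}. norm (f y) \<le> B"
proof -
  have "\<forall>x. \<exists>e. e > 0 \<and> (\<exists>B. \<forall>y. \<bar>y - x\<bar> < e \<longrightarrow> norm (f y) \<le> B)"
    using pc_local_bound[OF assms] by blast
  then obtain e where e: "\<And>x. e x > 0" "\<And>x. \<exists>B. \<forall>y. \<bar>y - x\<bar> < e x \<longrightarrow> norm (f y) \<le> B"
    by metis
  then obtain B where B: "\<And>x y. \<bar>y - x\<bar> < e x \<Longrightarrow> norm (f y) \<le> B x" by metis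
  have "{a..b} \<subseteq> (\<Union>x\<in>{a..b}. ball x (e x))" using e(1) by force
  then obtain C where C: "C \<subseteq> {a..b}" "finite C" "{a..b} \<subseteq> (\<Union>x\<in>C. ball x (e x))"
    using compactE_image[of "{a..b}" "{a..b}" "\<lambda>x. ball x (e x)"] by auto
  show ?thesis
  proof (intro exI ballI)
    fix y assume "y \<in> {a..b}"
    then obtain x where x: "x \<in> C" "y \<in> ball x (e x)" using C(3) by auto
    then have "norm (f y) \<le> B x" using B[of y x] by (auto simp: dist_real_def abs_minus_commute)
    also have "\<dots> \<le> \<bar>B x\<bar>" by simp
    also have "\<dots> \<le> (\<Sum>z\<in>C. \<bar>B z\<bar>)" by (rule member_le_sum) (use x C in auto)
    finally show "norm (f y) \<le> (\<Sum>z\<in>C. \<bar>B z\<bar>)" .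
  qed
qed




lemma pc_measurable:
  assumes "piecewise_continuous f"
  shows "f \<in> borel_measurable lebesgue"
proof -
  have "\<forall>n::nat. \<exists>D. finite D \<and> (\<forall>x\<in>{-real n..real n} - D. isCont f x)"
    using assms unfolding piecewise_continuous_def by blast
  then obtain D where D: "\<And>n. finite (D n)" "\<And>n x. x \<in> {-real n..real n} - D n \<Longrightarrow> isCont f x"
    by metis
  define E where "E = (\<Union>n. D n)"
  have cE: "countable E" unfolding E_def using D(1) by (simp add: countable_finite)
  have cont: "isCont f x" if "x \<notin> E" for x
  proof -
    have "x \<in> {-real (nat \<lceil>\<bar>x\<bar>\<rceil>)..real (nat \<lceil>\<bar>x\<bar>\<rceil>)}" by auto linarith+
    then show ?thesis using D(2) that unfolding E_def by blast
  qed
  have "continuous_on (UNIV - E) f"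
    using cont by (intro continuous_at_imp_continuous_on) auto
  have nE: "E \<in> null_sets lborel" using cE by (rule countable_imp_null_set_lborel)
  then have nE': "E \<in> null_sets lebesgue" by (rule null_sets_completionI)
  have sE: "UNIV - E \<in> sets lebesgue" using nE' by auto
  have "f \<in> borel_measurable (lebesgue_on (UNIV - E))"
    by (rule continuous_imp_measurable_on_sets_lebesgue) fact+
  then have g: "(\<lambda>x. if x \<in> UNIV - E then f x else 0) \<in> borel_measurable lebesgue"
    using sE by (rule borel_measurable_if_I)
  have "AE x in lebesgue. x \<notin> E" using nE' by (rule AE_not_in)
  then have "AE x in lebesgue. (if x \<in> UNIV - E then f x else 0) = f x" by eventually_elim auto
  then show ?thesis using borel_measurable_AE[OF g] by blast
qed




lemma cont_meas_leb:
  fixes h :: "real \<Rightarrow> 'b::euclidean_space"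
  assumes "continuous_on UNIV h"
  shows "h \<in> borel_measurable lebesgue"
  using continuous_imp_measurable_on_sets_lebesgue[OF assms] by (simp add: lebesgue_on_UNIV_eq)

lemma scaled_norm_integral:
  fixes \<phi> :: "real \<Rightarrow> complex" and K :: real
  assumes "integrable lebesgue \<phi>" "K > 0"
  shows "integrable lebesgue (\<lambda>y. norm (K * \<phi> (K * y)))"
    "(\<integral>y. norm (K * \<phi> (K * y)) \<partial>lebesgue) = (\<integral>y. norm (\<phi> y) \<partial>lebesgue)"
proof -
  have n: "integrable lebesgue (\<lambda>y. norm (\<phi> y))" using assms(1) by auto
  have i: "integrable lebesgue (\<lambda>y. norm (\<phi> (0 + K * y)))"
    using lebesgue_integrable_real_affine[OF n, of K 0] assms(2) by simp
  have e: "norm (K * \<phi> (K * y)) = K * norm (\<phi> (K * y))" for y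
    using assms(2) by (simp add: norm_mult)
  show "integrable lebesgue (\<lambda>y. norm (K * \<phi> (K * y)))" unfolding e using i by simp
  have "(\<integral>y. norm (\<phi> y) \<partial>lebesgue) = \<bar>K\<bar> *\<^sub>R (\<integral>y. norm (\<phi> (0 + K * y)) \<partial>lebesgue)"
    using lebesgue_integral_real_affine[of K "\<lambda>y. norm (\<phi> y)" 0] assms(2) by simp
  then show "(\<integral>y. norm (K * \<phi> (K * y)) \<partial>lebesgue) = (\<integral>y. norm (\<phi> y) \<partial>lebesgue)"
    unfolding e using assms(2) by simp
qed

lemma tail_aux:
  fixes A Q P W K c :: real
  assumes "A \<ge> 0" "Q > 0" "P > 0" "W > 0" "K * P * W \<le> c * Q"
  shows "K * (A / Q) \<le> A * c / P * (1 / W)"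
proof -
  have "A * (K * P * W) \<le> A * (c * Q)" using assms by (intro mult_left_mono) auto
  then show ?thesis using assms by (simp add: field_simps)
qed

lemma tail_bound:
  fixes A K \<delta> y :: real
  assumes "A \<ge> 0" "K \<ge> 1" "0 < \<delta>" "\<delta> \<le> 1" "\<bar>y\<bar> \<ge> \<delta>"
  shows "K * (A / (1 + K * \<bar>y\<bar>) ^ (M+1)) \<le> A * (2/\<delta>)^(M+1) / K ^ M * (1 / (1 + \<bar>y\<bar>) ^ M)"
proof -
  have K0: "K > 0" using assms by auto
  have key: "K * (1 + \<bar>y\<bar>) \<le> (2/\<delta>) * (1 + K * \<bar>y\<bar>)"
  proof -
    have "K \<le> K * \<bar>y\<bar> / \<delta>" using assms K0 by (simp add: field_simps)
    moreover have "K * \<bar>y\<bar> \<le> K * \<bar>y\<bar> / \<delta>"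
    proof -
      have "\<delta> * \<bar>y\<bar> \<le> 1 * \<bar>y\<bar>" using assms by (intro mult_right_mono) auto
      then show ?thesis using assms K0 by (simp add: field_simps)
    qed
    moreover have "2 * (K * \<bar>y\<bar>) / \<delta> \<le> (2/\<delta>) * (1 + K * \<bar>y\<bar>)" using assms by (simp add: field_simps)
    ultimately show ?thesis by (simp add: algebra_simps add_divide_distrib[symmetric])
  qed
  have "K ^ (M+1) * (1 + \<bar>y\<bar>) ^ M \<le> K ^ (M+1) * (1 + \<bar>y\<bar>) ^ (M+1)"
    using K0 by (intro mult_left_mono power_increasing) auto
  also have "\<dots> = (K * (1 + \<bar>y\<bar>)) ^ (M+1)" by (simp add: power_mult_distrib)
  also have "\<dots> \<le> ((2/\<delta>) * (1 + K * \<bar>y\<bar>)) ^ (M+1)"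
    using key K0 by (intro power_mono) auto
  finally have ineq0: "K ^ (M+1) * (1 + \<bar>y\<bar>) ^ M \<le> ((2/\<delta>) * (1 + K * \<bar>y\<bar>)) ^ (M+1)" .
  then have ineq: "K ^ (M+1) * (1 + \<bar>y\<bar>) ^ M \<le> (2/\<delta>) ^ (M+1) * (1 + K * \<bar>y\<bar>) ^ (M+1)"
    by (simp only: power_mult_distrib)
  have p1: "(1 + K * \<bar>y\<bar>) ^ (M+1) > 0" using K0 by (intro zero_less_power) (simp add: add_pos_nonneg)
  have p2: "(1 + \<bar>y\<bar>) ^ M > 0" by simp
  have p3: "K ^ M > 0" using K0 by simp
  have "K ^ (M+1) = K * K ^ M" by simp
  then have ineq': "K * K ^ M * (1 + \<bar>y\<bar>) ^ M \<le> (2/\<delta>) ^ (M+1) * (1 + K * \<bar>y\<bar>) ^ (M+1)"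
    using ineq by simp
  show ?thesis using tail_aux[OF assms(1) p1 p3 p2 ineq'] .
qed

lemma psi_bound1:
  fixes \<phi> :: "real \<Rightarrow> complex"
  assumes \<phi>A: "\<And>s. norm (\<phi> s) \<le> A / (1+\<bar>s\<bar>)^(M+1)" and K: "K \<ge> 1"
  shows "norm (K * \<phi> (K * y)) \<le> K * A * (1 / (1+\<bar>y\<bar>)^M)"
proof -
  have A0: "A \<ge> 0" using \<phi>A[of 0] by simp (metis norm_ge_zero order_trans)
  have "norm (K * \<phi> (K * y)) = K * norm (\<phi> (K * y))" using K by (simp add: norm_mult)
  also have "\<dots> \<le> K * (A / (1+\<bar>K * y\<bar>)^(M+1))" using K \<phi>A by (intro mult_left_mono) auto
  also have "\<dots> \<le> K * (A / (1+\<bar>y\<bar>)^M)"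
  proof (intro mult_left_mono divide_left_mono)
    have "(1+\<bar>y\<bar>)^M \<le> (1+\<bar>y\<bar>)^(M+1)" by (intro power_increasing) auto
    also have "\<dots> \<le> (1+\<bar>K * y\<bar>)^(M+1)"
    proof (intro power_mono)
      have "1 * \<bar>y\<bar> \<le> K * \<bar>y\<bar>" using K by (intro mult_right_mono) auto
      then show "1 + \<bar>y\<bar> \<le> 1 + \<bar>K * y\<bar>" using K by (simp add: abs_mult)
    qed auto
    finally show "(1+\<bar>y\<bar>)^M \<le> (1+\<bar>K * y\<bar>)^(M+1)" .
  qed (use K A0 in \<open>auto intro!: mult_pos_pos\<close>)
  finally show ?thesis by simp
qed

lemma conv_integrable:
  fixes g \<phi> :: "real \<Rightarrow> complex"
  assumes gm: "g \<in> borel_measurable lebesgue"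
    and gi: "integrable lebesgue (\<lambda>y. norm (g y) * (1 / (1+\<bar>y\<bar>)^M))"
    and \<phi>c: "continuous_on UNIV \<phi>"
    and \<phi>A: "\<And>s. norm (\<phi> s) \<le> A / (1+\<bar>s\<bar>)^(M+1)"
    and K: "K \<ge> 1"
  shows "integrable lebesgue (\<lambda>y. g y * (K * \<phi> (K * y)))"
proof (rule Bochner_Integration.integrable_bound)
  show "integrable lebesgue (\<lambda>y. K * A * (norm (g y) * (1 / (1+\<bar>y\<bar>)^M)))"
    by (rule integrable_mult_right) (rule gi)
  have "continuous_on UNIV (\<lambda>y. K * \<phi> (K * y))"
    by (intro continuous_intros continuous_on_compose2[OF \<phi>c]) auto
  then show "(\<lambda>y. g y * (K * \<phi> (K * y))) \<in> borel_measurable lebesgue"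
    using gm cont_meas_leb by measurable
  have A0: "A \<ge> 0" using \<phi>A[of 0] by simp (metis norm_ge_zero order_trans)
  show "AE y in lebesgue. norm (g y * (K * \<phi> (K * y))) \<le> norm (K * A * (norm (g y) * (1 / (1+\<bar>y\<bar>)^M)))"
  proof (rule AE_I2)
    fix y
    have "norm (g y * (K * \<phi> (K * y))) = norm (g y) * norm (K * \<phi> (K * y))" by (simp add: norm_mult)
    also have "\<dots> \<le> norm (g y) * (K * A * (1 / (1+\<bar>y\<bar>)^M))"
      by (intro mult_left_mono psi_bound1[OF \<phi>A K]) auto
    also have "\<dots> \<le> norm (K * A * (norm (g y) * (1 / (1+\<bar>y\<bar>)^M)))"
      using K A0 by (simp add: abs_mult mult_ac)
    finally show "norm (g y * (K * \<phi> (K * y))) \<le> norm (K * A * (norm (g y) * (1 / (1+\<bar>y\<bar>)^M)))" .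
  qed
qed

lemma conv_main:
  fixes g \<phi> :: "real \<Rightarrow> complex"
  assumes gm: "g \<in> borel_measurable lebesgue"
    and gi: "integrable lebesgue (\<lambda>y. norm (g y) * (1 / (1+\<bar>y\<bar>)^M))"
    and g0: "\<And>e. e > 0 \<Longrightarrow> \<exists>d>0. \<forall>y. \<bar>y\<bar> < d \<longrightarrow> norm (g y) \<le> e"
    and M1: "M \<ge> 1"
    and \<phi>c: "continuous_on UNIV \<phi>"
    and \<phi>A: "\<And>s. norm (\<phi> s) \<le> A / (1+\<bar>s\<bar>)^(M+1)"
    and \<phi>i: "integrable lebesgue \<phi>"
  shows "(\<lambda>k::nat. \<integral>y. g y * (of_nat k * \<phi> (of_nat k * y)) \<partial>lebesgue) \<longlonglongrightarrow> 0"
proof (rule LIMSEQ_I)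
  fix r :: real assume r: "r > 0"
  define P where "P = (\<integral>y. norm (\<phi> y) \<partial>lebesgue)"
  define G where "G = (\<integral>y. norm (g y) * (1 / (1+\<bar>y\<bar>)^M) \<partial>lebesgue)"
  have P0: "P \<ge> 0" unfolding P_def by simp
  have G0: "G \<ge> 0" unfolding G_def by (rule Bochner_Integration.integral_nonneg) simp
  have A0: "A \<ge> 0" using \<phi>A[of 0] by simp (metis norm_ge_zero order_trans)
  define \<epsilon> where "\<epsilon> = r / (2 * (P + 1))"
  have \<epsilon>0: "\<epsilon> > 0" unfolding \<epsilon>_def using r P0 by simp
  obtain d0 where d0: "d0 > 0" "\<And>y. \<bar>y\<bar> < d0 \<Longrightarrow> norm (g y) \<le> \<epsilon>" using g0[OF \<epsilon>0] by blast
  define \<delta> where "\<delta> = min d0 1"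
  have \<delta>: "0 < \<delta>" "\<delta> \<le> 1" "\<delta> \<le> d0" unfolding \<delta>_def using d0 by auto
  define Bc where "Bc = A * (2/\<delta>)^(M+1)"
  have Bc0: "Bc \<ge> 0" unfolding Bc_def using A0 \<delta> by simp
  define K0 where "K0 = nat \<lceil>Bc * G / \<epsilon>\<rceil> + 1"
  show "\<exists>no. \<forall>k\<ge>no. norm ((\<integral>y. g y * (of_nat k * \<phi> (of_nat k * y)) \<partial>lebesgue) - 0) < r"
  proof (intro exI allI impI)
    fix k assume k: "k \<ge> K0"
    define K where "K = real k"
    have K1: "K \<ge> 1" unfolding K_def using k K0_def by simp
    have KB: "Bc * G / \<epsilon> < K" unfolding K_def using k K0_def by linarith
    have pw: "norm (g y * (K * \<phi> (K * y))) \<le> \<epsilon> * norm (K * \<phi> (K * y)) + Bc / K ^ M * (norm (g y) * (1 / (1+\<bar>y\<bar>)^M))"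
      for y
    proof (cases "\<bar>y\<bar> < \<delta>")
      case True
      then have "norm (g y) \<le> \<epsilon>" using d0 \<delta> by auto
      then have "norm (g y * (K * \<phi> (K * y))) \<le> \<epsilon> * norm (K * \<phi> (K * y))"
        by (simp add: norm_mult mult_right_mono)
      moreover have "0 \<le> Bc / K ^ M * (norm (g y) * (1 / (1+\<bar>y\<bar>)^M))" using Bc0 K1 by simp
      ultimately show ?thesis by linarith
    next
      case False
      have "norm (K * \<phi> (K * y)) = K * norm (\<phi> (K * y))" using K1 by (simp add: norm_mult)
      also have "\<dots> \<le> K * (A / (1 + K * \<bar>y\<bar>) ^ (M+1))"
        using \<phi>A[of "K * y"] K1 by (intro mult_left_mono) (auto simp: abs_mult)
      also have "\<dots> \<le> Bc / K ^ M * (1 / (1 + \<bar>y\<bar>) ^ M)"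
        unfolding Bc_def by (rule tail_bound) (use A0 K1 \<delta> False in auto)
      finally have n\<psi>: "norm (K * \<phi> (K * y)) \<le> Bc / K ^ M * (1 / (1 + \<bar>y\<bar>) ^ M)" .
      have "norm (g y * (K * \<phi> (K * y))) = norm (g y) * norm (K * \<phi> (K * y))" by (rule norm_mult)
      also have "\<dots> \<le> norm (g y) * (Bc / K ^ M * (1 / (1 + \<bar>y\<bar>) ^ M))"
        using n\<psi> by (rule mult_left_mono) simp
      also have "\<dots> = Bc / K ^ M * (norm (g y) * (1 / (1+\<bar>y\<bar>)^M))" by simp
      finally show ?thesis using \<epsilon>0 by (smt (verit) mult_nonneg_nonneg norm_ge_zero)
    qed
    have i1: "integrable lebesgue (\<lambda>y. norm (K * \<phi> (K * y)))"
      using scaled_norm_integral(1)[OF \<phi>i, of K] K1 by simp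
    have i2: "integrable lebesgue (\<lambda>y. \<epsilon> * norm (K * \<phi> (K * y)) + Bc / K ^ M * (norm (g y) * (1 / (1+\<bar>y\<bar>)^M)))"
      using i1 gi by (intro Bochner_Integration.integrable_add Bochner_Integration.integrable_mult_right) auto
    have i3: "integrable lebesgue (\<lambda>y. g y * (K * \<phi> (K * y)))"
      by (rule conv_integrable[OF gm gi \<phi>c \<phi>A K1])
    have "norm (\<integral>y. g y * (K * \<phi> (K * y)) \<partial>lebesgue)
       \<le> (\<integral>y. \<epsilon> * norm (K * \<phi> (K * y)) + Bc / K ^ M * (norm (g y) * (1 / (1+\<bar>y\<bar>)^M)) \<partial>lebesgue)"
      by (rule Bochner_Integration.integral_norm_bound_integral[OF i3 i2 pw])
    also have "\<dots> = \<epsilon> * P + Bc / K ^ M * G"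
    proof -
      have "(\<integral>y. \<epsilon> * norm (K * \<phi> (K * y)) + Bc / K ^ M * (norm (g y) * (1 / (1+\<bar>y\<bar>)^M)) \<partial>lebesgue)
        = (\<integral>y. \<epsilon> * norm (K * \<phi> (K * y)) \<partial>lebesgue) + (\<integral>y. Bc / K ^ M * (norm (g y) * (1 / (1+\<bar>y\<bar>)^M)) \<partial>lebesgue)"
        by (rule Bochner_Integration.integral_add; rule Bochner_Integration.integrable_mult_right) (use i1 gi in auto)
      moreover have "K > 0" using K1 by simp
      ultimately show ?thesis
        unfolding integral_mult_right_zero P_def G_def scaled_norm_integral(2)[OF \<phi>i \<open>K > 0\<close>] by (rule conjunct1[OF conjI])
    qed
    also have "Bc / K ^ M * G \<le> \<epsilon>"
    proof -
      have "K \<le> K ^ M" using K1 M1 by (metis power_one_right power_increasing)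
      then have "Bc / K ^ M * G \<le> Bc / K * G" using K1 Bc0 G0
        by (intro mult_right_mono divide_left_mono) auto
      also have "\<dots> \<le> \<epsilon>" using KB K1 \<epsilon>0 by (simp add: field_simps)
      finally show ?thesis .
    qed
    finally have "norm (\<integral>y. g y * (K * \<phi> (K * y)) \<partial>lebesgue) \<le> \<epsilon> * P + \<epsilon>" by simp
    also have "\<dots> = r / 2"
    proof -
      have "P + 1 \<noteq> 0" using P0 by simp
      then have "\<epsilon> * (P + 1) = r / 2" unfolding \<epsilon>_def by (simp add: field_simps)
      then show ?thesis by (simp add: algebra_simps)
    qed
    also have "\<dots> < r" using r by simp
    finally show "norm ((\<integral>y. g y * (of_nat k * \<phi> (of_nat k * y)) \<partial>lebesgue) - 0) < r"
      unfolding K_def by simp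
  qed
qed


lemma hk_to_leb:
  fixes h :: "real \<Rightarrow> real"
  assumes "h integrable_on UNIV" "\<And>x. 0 \<le> h x"
  shows "integrable lebesgue h"
proof -
  have "h absolutely_integrable_on UNIV" using assms by (intro nonnegative_absolutely_integrable_1) auto
  then show ?thesis by (simp add: set_integrable_def)
qed

lemma pc_norm_integrable:
  assumes "piecewise_continuous f"
  shows "(\<lambda>x. norm (f x)) integrable_on {a..b}"
proof -
  obtain B where B: "\<And>y. y \<in> {a..b} \<Longrightarrow> norm (f y) \<le> B" using pc_bounded[OF assms] by blast
  have fm: "f \<in> borel_measurable lebesgue" by (rule pc_measurable[OF assms])
  have "f absolutely_integrable_on {a..b}"
  proof (rule measurable_bounded_by_integrable_imp_absolutely_integrable)
    show "f \<in> borel_measurable (lebesgue_on {a..b})" using fm by (rule measurable_restrict_space1)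
    show "(\<lambda>x. B) integrable_on {a..b}" by (rule integrable_const_ivl)
  qed (use B in auto)
  then show ?thesis by (simp add: absolutely_integrable_on_def)
qed

lemma shift_weighted:
  fixes f :: "real \<Rightarrow> complex"
  assumes fi: "integrable lebesgue (\<lambda>x. norm (f x) * (1 / (1+\<bar>x\<bar>)^M))"
    and fm: "f \<in> borel_measurable lebesgue" and s: "\<bar>\<sigma>\<bar> = 1"
  shows "integrable lebesgue (\<lambda>y. norm (f (c + \<sigma> * y)) * (1 / (1+\<bar>y\<bar>)^M))"
proof (rule Bochner_Integration.integrable_bound)
  have s0: "\<sigma> \<noteq> 0" using s by auto
  have "integrable lebesgue (\<lambda>y. norm (f (c + \<sigma> * y)) * (1 / (1+\<bar>c + \<sigma> * y\<bar>)^M))"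
    using lebesgue_integrable_real_affine[OF fi s0, of c] by simp
  then show "integrable lebesgue (\<lambda>y. (1+\<bar>c\<bar>)^M * (norm (f (c + \<sigma> * y)) * (1 / (1+\<bar>c + \<sigma> * y\<bar>)^M)))"
    by (rule Bochner_Integration.integrable_mult_right)
  have "(\<lambda>x. f (c + \<sigma> *\<^sub>R x)) \<in> borel_measurable lebesgue" by (rule borel_measurable_affine[OF fm s0])
  then have "(\<lambda>x. f (c + \<sigma> * x)) \<in> borel_measurable lebesgue" by simp
  moreover have "continuous_on UNIV (\<lambda>y::real. 1 / (1+\<bar>y\<bar>)^M)"
    by (intro continuous_intros) (auto simp: add_pos_nonneg)
  ultimately show "(\<lambda>y. norm (f (c + \<sigma> * y)) * (1 / (1+\<bar>y\<bar>)^M)) \<in> borel_measurable lebesgue"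
    using cont_meas_leb by measurable
  show "AE y in lebesgue. norm (norm (f (c + \<sigma> * y)) * (1 / (1+\<bar>y\<bar>)^M))
      \<le> norm ((1+\<bar>c\<bar>)^M * (norm (f (c + \<sigma> * y)) * (1 / (1+\<bar>c + \<sigma> * y\<bar>)^M)))"
  proof (rule AE_I2)
    fix y
    have b: "1 + \<bar>c + \<sigma> * y\<bar> \<le> (1+\<bar>c\<bar>) * (1+\<bar>y\<bar>)"
    proof -
      have "\<bar>c + \<sigma> * y\<bar> \<le> \<bar>c\<bar> + \<bar>y\<bar>" using s by (metis abs_mult abs_triangle_ineq mult_1)
      moreover have "0 \<le> \<bar>c\<bar> * \<bar>y\<bar>" by simp
      moreover have "(1+\<bar>c\<bar>) * (1+\<bar>y\<bar>) = 1 + \<bar>c\<bar> + \<bar>y\<bar> + \<bar>c\<bar> * \<bar>y\<bar>" by (simp add: algebra_simps)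
      ultimately show ?thesis by linarith
    qed
    have "(1 + \<bar>c + \<sigma> * y\<bar>)^M \<le> ((1+\<bar>c\<bar>) * (1+\<bar>y\<bar>))^M" using b by (intro power_mono) auto
    then have "1 / (1+\<bar>y\<bar>)^M \<le> (1+\<bar>c\<bar>)^M / (1 + \<bar>c + \<sigma> * y\<bar>)^M"
      by (simp add: divide_simps power_mult_distrib mult.commute)
    then have "norm (f (c + \<sigma> * y)) * (1 / (1+\<bar>y\<bar>)^M) \<le> norm (f (c + \<sigma> * y)) * ((1+\<bar>c\<bar>)^M / (1 + \<bar>c + \<sigma> * y\<bar>)^M)"
      by (intro mult_left_mono) auto
    then show "norm (norm (f (c + \<sigma> * y)) * (1 / (1+\<bar>y\<bar>)^M))
      \<le> norm ((1+\<bar>c\<bar>)^M * (norm (f (c + \<sigma> * y)) * (1 / (1+\<bar>c + \<sigma> * y\<bar>)^M)))"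
      by (simp add: abs_mult mult_ac)
  qed
qed

lemma tendsto_left_iff:
  fixes f :: "real \<Rightarrow> 'a::topological_space"
  shows "(f \<longlongrightarrow> l) (at_left a) \<longleftrightarrow> ((\<lambda>x. f (a - x)) \<longlongrightarrow> l) (at_right 0)"
  unfolding at_left_minus[of a] filterlim_filtermap
  by (subst filterlim_at_right_to_0) simp

lemma tendsto_left0_iff:
  fixes f :: "real \<Rightarrow> 'a::topological_space"
  shows "(f \<longlongrightarrow> l) (at_left 0) \<longleftrightarrow> ((\<lambda>x. f (- x)) \<longlongrightarrow> l) (at_right 0)"
  using tendsto_left_iff[of f l 0] by simp


theorem theorem6p1:
  fixes \<phi> f :: "real \<Rightarrow> complex" and c :: real
  assumes "\<phi> \<in> schwartz"
    and "\<And>x. \<phi> (- x) = \<phi> x"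
    and "integral UNIV \<phi> = 1"
    and "f \<in> SG"
  shows "(\<lambda>k::nat. integral UNIV (\<lambda>x. f x * (of_nat k * \<phi> (of_nat k * (x - c)))))
           \<longlonglongrightarrow> f c"
proof -
  have pc: "piecewise_continuous f" and fmid: "\<And>x. f x = (Lim (at_right x) f + Lim (at_left x) f) / 2"
    using assms(4) unfolding SG_def PC_bj_def by auto
  obtain C :: real and N :: nat where C: "C > 0"
    and CN: "\<And>R. R > 0 \<Longrightarrow> integral {-R..R} (\<lambda>x. norm (f x)) \<le> C * (1 + R) ^ N"
    using assms(4) unfolding SG_def by blast
  define M where "M = N + 1 + 2"
  have M1: "M \<ge> 1" unfolding M_def by simp
  have fm: "f \<in> borel_measurable lebesgue" by (rule pc_measurable[OF pc])
  have fw: "integrable lebesgue (\<lambda>x. norm (f x) * (1 / (1+\<bar>x\<bar>)^M))"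
  proof -
    have "(\<lambda>x. norm (f x) / (1+\<bar>x\<bar>)^(N+1+2)) integrable_on UNIV"
    proof (rule weighted_integrable[where C=C])
      show "(\<lambda>x. norm (f x)) integrable_on {-R..R}" for R by (rule pc_norm_integrable[OF pc])
      fix R :: real assume R: "R > 0"
      have "C * (1 + R) ^ N \<le> C * (1 + R) ^ (N+1)"
        using C R by (intro mult_left_mono power_increasing) auto
      then show "integral {-R..R} (\<lambda>x. norm (f x)) \<le> C * (1 + R) ^ (N+1)" using CN[OF R] by linarith
    qed simp
    then have "(\<lambda>x. norm (f x) / (1+\<bar>x\<bar>)^M) integrable_on UNIV" unfolding M_def .
    then have "integrable lebesgue (\<lambda>x. norm (f x) / (1+\<bar>x\<bar>)^M)" by (rule hk_to_leb) simp
    then show ?thesis by simp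
  qed
  have ww: "integrable lebesgue (\<lambda>x::real. 1 / (1+\<bar>x\<bar>)^M)"
  proof -
    have "(\<lambda>x::real. 1 / (1+\<bar>x\<bar>)^(N+1+2)) integrable_on UNIV"
    proof (rule weighted_integrable[where C=2])
      fix R :: real assume R: "R > 0"
      have "1 + R \<le> (1 + R) ^ (N+1)"
      proof -
        have "(1 + R) ^ 1 \<le> (1 + R) ^ (N+1)" using R by (intro power_increasing) auto
        then show ?thesis by simp
      qed
      moreover have "integral {-R..R} (\<lambda>x. 1::real) = 2 * R" using R by simp
      ultimately show "integral {-R..R} (\<lambda>x. 1) \<le> 2 * (1 + R) ^ (N+1)" using R by linarith
    next
      show "(\<lambda>x. 1::real) integrable_on {-R..R}" for R :: real by (rule integrable_const_ivl)
    qed simp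
    then have "(\<lambda>x::real. 1 / (1+\<bar>x\<bar>)^M) integrable_on UNIV" unfolding M_def .
    then show ?thesis by (rule hk_to_leb) simp
  qed
  have \<phi>c: "continuous_on UNIV \<phi>" by (rule schwartz_cont[OF assms(1)])
  obtain A where \<phi>A: "\<And>s. norm (\<phi> s) \<le> A / (1+\<bar>s\<bar>)^(M+1)"
    using schwartz_decay[OF assms(1), of "M+1"] by blast
  have A0: "A \<ge> 0" using \<phi>A[of 0] by simp (metis norm_ge_zero order_trans)
  have \<phi>i: "integrable lebesgue \<phi>"
  proof (rule Bochner_Integration.integrable_bound)
    show "integrable lebesgue (\<lambda>x::real. A * (1 / (1+\<bar>x\<bar>)^M))"
      by (rule Bochner_Integration.integrable_mult_right) (rule ww)
    show "\<phi> \<in> borel_measurable lebesgue" by (rule cont_meas_leb[OF \<phi>c])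
    show "AE x in lebesgue. norm (\<phi> x) \<le> norm (A * (1 / (1+\<bar>x\<bar>)^M))"
    proof (rule AE_I2)
      fix x :: real
      have "A / (1+\<bar>x\<bar>)^(M+1) \<le> A / (1+\<bar>x\<bar>)^M"
        using A0 by (intro divide_left_mono power_increasing mult_pos_pos) auto
      then show "norm (\<phi> x) \<le> norm (A * (1 / (1+\<bar>x\<bar>)^M))" using \<phi>A[of x] A0 by simp
    qed
  qed
  have \<phi>1: "(\<integral>x. \<phi> x \<partial>lebesgue) = 1" using integral_lebesgue[OF \<phi>i] assms(3) by simp
  obtain Lp Lm where Lp: "(f \<longlongrightarrow> Lp) (at_right c)" and Lm: "(f \<longlongrightarrow> Lm) (at_left c)"
  proof -
    obtain D where D: "finite D" "\<forall>y\<in>{c..c} - D. isCont f y"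
      "\<forall>y\<in>D. (\<exists>l. (f \<longlongrightarrow> l) (at_left y)) \<and> (\<exists>l. (f \<longlongrightarrow> l) (at_right y))"
      using pc unfolding piecewise_continuous_def by blast
    show ?thesis
    proof (cases "c \<in> D")
      case True then show ?thesis using D(3) that by blast
    next
      case False
      then have "isCont f c" using D(2) by auto
      then have "(f \<longlongrightarrow> f c) (at c)" by (simp add: isCont_def)
      then show ?thesis using that filterlim_at_split by blast
    qed
  qed
  have fc: "f c = (Lp + Lm) / 2"
    using fmid[of c] tendsto_Lim[OF _ Lp] tendsto_Lim[OF _ Lm] by simp
  define g where "g y = (f (c + y) + f (c - y)) / 2 - f c" for y
  have Fp: "((\<lambda>y. f (c + y)) \<longlongrightarrow> Lp) (at_right 0)"
    using Lp unfolding filterlim_at_right_to_0[of f _ c] by (simp add: add.commute)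
  have Fm: "((\<lambda>y. f (c - y)) \<longlongrightarrow> Lm) (at_right 0)"
    using Lm unfolding tendsto_left_iff .
  have gr: "(g \<longlongrightarrow> 0) (at_right 0)"
  proof -
    have "(g \<longlongrightarrow> (Lp + Lm) / 2 - f c) (at_right 0)"
      unfolding g_def by (intro tendsto_intros Fp Fm) simp_all
    then show ?thesis using fc by simp
  qed
  have gl: "(g \<longlongrightarrow> 0) (at_left 0)"
  proof -
    have eq: "(\<lambda>y. g (- y)) = (\<lambda>y. (f (c - y) + f (c + y)) / 2 - f c)" unfolding g_def by simp
    have "((\<lambda>y. (f (c - y) + f (c + y)) / 2 - f c) \<longlongrightarrow> (Lm + Lp) / 2 - f c) (at_right 0)"
      by (intro tendsto_intros Fp Fm) simp_all
    then have "((\<lambda>y. g (- y)) \<longlongrightarrow> (Lm + Lp) / 2 - f c) (at_right 0)" unfolding eq .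
    then show ?thesis using fc unfolding tendsto_left0_iff by (simp add: add.commute)
  qed
  have g00: "g 0 = 0" unfolding g_def by simp
  have g0: "\<exists>d>0. \<forall>y. \<bar>y\<bar> < d \<longrightarrow> norm (g y) \<le> e" if e: "e > 0" for e
  proof -
    have "(g \<longlongrightarrow> 0) (at 0)" using gl gr by (rule filterlim_split_at)
    then have "eventually (\<lambda>y. dist (g y) 0 < e) (at 0)" using e by (rule tendstoD)
    then obtain d where d: "d > 0" "\<And>y. y \<noteq> 0 \<Longrightarrow> dist y 0 < d \<Longrightarrow> dist (g y) 0 < e"
      unfolding eventually_at by auto
    show ?thesis
    proof (intro exI conjI allI impI)
      fix y :: real assume "\<bar>y\<bar> < d"
      then show "norm (g y) \<le> e" using d(2)[of y] g00 e by (cases "y = 0") auto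
    qed (use d in auto)
  qed
  have fpm: "(\<lambda>y. f (c + y)) \<in> borel_measurable lebesgue"
    using borel_measurable_affine[OF fm, of 1 c] by simp
  have fmm: "(\<lambda>y. f (c - y)) \<in> borel_measurable lebesgue"
    using borel_measurable_affine[OF fm, of "-1" c] by simp
  have fpw: "integrable lebesgue (\<lambda>y. norm (f (c + y)) * (1 / (1+\<bar>y\<bar>)^M))"
    using shift_weighted[OF fw fm, of 1 c] by simp
  have fmw: "integrable lebesgue (\<lambda>y. norm (f (c - y)) * (1 / (1+\<bar>y\<bar>)^M))"
    using shift_weighted[OF fw fm, of "-1" c] by simp
  have gm: "g \<in> borel_measurable lebesgue" unfolding g_def using fpm fmm by measurable
  have gw: "integrable lebesgue (\<lambda>y. norm (g y) * (1 / (1+\<bar>y\<bar>)^M))"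
  proof (rule Bochner_Integration.integrable_bound)
    show "integrable lebesgue (\<lambda>y. norm (f (c + y)) * (1 / (1+\<bar>y\<bar>)^M) + norm (f (c - y)) * (1 / (1+\<bar>y\<bar>)^M)
        + norm (f c) * (1 / (1+\<bar>y\<bar>)^M))"
      using fpw fmw ww by (intro Bochner_Integration.integrable_add Bochner_Integration.integrable_mult_right) auto
    have "continuous_on UNIV (\<lambda>y::real. 1 / (1+\<bar>y\<bar>)^M)"
      by (intro continuous_intros) (auto simp: add_pos_nonneg)
    then show "(\<lambda>y. norm (g y) * (1 / (1+\<bar>y\<bar>)^M)) \<in> borel_measurable lebesgue"
      using gm cont_meas_leb by measurable
    show "AE y in lebesgue. norm (norm (g y) * (1 / (1+\<bar>y\<bar>)^M)) \<le>
       norm (norm (f (c + y)) * (1 / (1+\<bar>y\<bar>)^M) + norm (f (c - y)) * (1 / (1+\<bar>y\<bar>)^M)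
        + norm (f c) * (1 / (1+\<bar>y\<bar>)^M))"
    proof (rule AE_I2)
      fix y :: real
      have "norm (g y) \<le> norm (f (c + y)) + norm (f (c - y)) + norm (f c)"
      proof -
        have "norm (g y) \<le> norm ((f (c + y) + f (c - y)) / 2) + norm (f c)"
          unfolding g_def by (rule norm_triangle_ineq4)
        also have "norm ((f (c + y) + f (c - y)) / 2) \<le> norm (f (c + y) + f (c - y))" by simp
        also have "\<dots> \<le> norm (f (c + y)) + norm (f (c - y))" by (rule norm_triangle_ineq)
        finally show ?thesis by simp
      qed
      then have "norm (g y) * (1 / (1+\<bar>y\<bar>)^M) \<le> (norm (f (c + y)) + norm (f (c - y)) + norm (f c)) * (1 / (1+\<bar>y\<bar>)^M)"
        by (intro mult_right_mono) auto
      then show "norm (norm (g y) * (1 / (1+\<bar>y\<bar>)^M)) \<le>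
       norm (norm (f (c + y)) * (1 / (1+\<bar>y\<bar>)^M) + norm (f (c - y)) * (1 / (1+\<bar>y\<bar>)^M)
        + norm (f c) * (1 / (1+\<bar>y\<bar>)^M))"
        by (simp add: algebra_simps)
    qed
  qed
  have lim: "(\<lambda>k::nat. \<integral>y. g y * (of_nat k * \<phi> (of_nat k * y)) \<partial>lebesgue) \<longlonglongrightarrow> 0"
    by (rule conv_main[OF gm gw g0 M1 \<phi>c \<phi>A \<phi>i])
  have key: "integral UNIV (\<lambda>x. f x * (of_nat k * \<phi> (of_nat k * (x - c))))
      = f c + (\<integral>y. g y * (of_nat k * \<phi> (of_nat k * y)) \<partial>lebesgue)" if k: "k \<ge> 1" for k :: nat
  proof -
    define K where "K = real k"
    have K1: "K \<ge> 1" using k unfolding K_def by simp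
    define \<Psi> where "\<Psi> x = f x * (of_real K * \<phi> (K * (x - c)))" for x
    define \<psi> where "\<psi> y = of_real K * \<phi> (K * y)" for y
    have ip: "integrable lebesgue (\<lambda>y. f (c + y) * \<psi> y)"
      unfolding \<psi>_def by (rule conv_integrable[OF fpm fpw \<phi>c \<phi>A K1])
    have im: "integrable lebesgue (\<lambda>y. f (c - y) * \<psi> y)"
      unfolding \<psi>_def by (rule conv_integrable[OF fmm fmw \<phi>c \<phi>A K1])
    have i\<psi>: "integrable lebesgue \<psi>"
    proof -
      have "integrable lebesgue (\<lambda>y. \<phi> (0 + K * y))"
        using lebesgue_integrable_real_affine[OF \<phi>i, of K 0] K1 by simp
      then show ?thesis unfolding \<psi>_def by (intro Bochner_Integration.integrable_mult_right) simp
    qed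
    have \<psi>1: "(\<integral>y. \<psi> y \<partial>lebesgue) = 1"
    proof -
      have "(\<integral>x. \<phi> x \<partial>lebesgue) = \<bar>K\<bar> *\<^sub>R (\<integral>y. \<phi> (0 + K * y) \<partial>lebesgue)"
        using lebesgue_integral_real_affine[of K \<phi> 0] K1 by simp
      then show ?thesis unfolding \<psi>_def using \<phi>1 K1 by (simp add: scaleR_conv_of_real)
    qed
    have i\<Psi>: "integrable lebesgue \<Psi>"
    proof -
      have "integrable lebesgue (\<lambda>x. (\<lambda>y. f (c + y) * \<psi> y) (- c + 1 * x))"
        using lebesgue_integrable_real_affine[OF ip, of 1 "-c"] by simp
      then show ?thesis unfolding \<Psi>_def \<psi>_def by simp
    qed
    have e1: "(\<integral>x. \<Psi> x \<partial>lebesgue) = (\<integral>y. f (c + y) * \<psi> y \<partial>lebesgue)"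
      using lebesgue_integral_real_affine[of 1 \<Psi> c] unfolding \<Psi>_def \<psi>_def by simp
    have e2: "(\<integral>x. \<Psi> x \<partial>lebesgue) = (\<integral>y. f (c - y) * \<psi> y \<partial>lebesgue)"
    proof -
      have "(\<integral>x. \<Psi> x \<partial>lebesgue) = \<bar>-1\<bar> *\<^sub>R (\<integral>y. \<Psi> (c + (-1) * y) \<partial>lebesgue)"
        by (rule lebesgue_integral_real_affine) simp
      also have "(\<lambda>y. \<Psi> (c + (-1) * y)) = (\<lambda>y. f (c - y) * \<psi> y)"
      proof
        fix y
        have "\<phi> (K * (c + (-1) * y - c)) = \<phi> (K * y)"
          using assms(2)[of "K * y"] by simp
        then show "\<Psi> (c + (-1) * y) = f (c - y) * \<psi> y" unfolding \<Psi>_def \<psi>_def by simp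
      qed
      finally show ?thesis by simp
    qed
    have gsplit: "(\<lambda>y. g y * \<psi> y) = (\<lambda>y. (1/2) * (f (c + y) * \<psi> y) + (1/2) * (f (c - y) * \<psi> y) - f c * \<psi> y)"
      unfolding g_def by (auto simp: algebra_simps)
    have "(\<integral>y. g y * \<psi> y \<partial>lebesgue)
        = (1/2) * (\<integral>y. f (c + y) * \<psi> y \<partial>lebesgue) + (1/2) * (\<integral>y. f (c - y) * \<psi> y \<partial>lebesgue)
          - f c * (\<integral>y. \<psi> y \<partial>lebesgue)"
      unfolding gsplit using ip im i\<psi>
      by (simp add: Bochner_Integration.integral_diff Bochner_Integration.integral_add)
    also have "\<dots> = (\<integral>x. \<Psi> x \<partial>lebesgue) - f c" using e1 e2 \<psi>1 by simp
    finally have "(\<integral>x. \<Psi> x \<partial>lebesgue) = f c + (\<integral>y. g y * \<psi> y \<partial>lebesgue)" by simp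
    moreover have "integral UNIV \<Psi> = (\<integral>x. \<Psi> x \<partial>lebesgue)" by (rule integral_lebesgue[OF i\<Psi>])
    ultimately show ?thesis unfolding \<Psi>_def \<psi>_def K_def by simp
  qed
  have "(\<lambda>k::nat. f c + (\<integral>y. g y * (of_nat k * \<phi> (of_nat k * y)) \<partial>lebesgue)) \<longlonglongrightarrow> f c + 0"
    by (intro tendsto_add tendsto_const lim)
  then have "(\<lambda>k::nat. f c + (\<integral>y. g y * (of_nat k * \<phi> (of_nat k * y)) \<partial>lebesgue)) \<longlonglongrightarrow> f c" by simp
  then show ?thesis
  proof (rule Lim_transform_eventually)
    show "\<forall>\<^sub>F k in sequentially. f c + (\<integral>y. g y * (of_nat k * \<phi> (of_nat k * y)) \<partial>lebesgue)
        = integral UNIV (\<lambda>x. f x * (of_nat k * \<phi> (of_nat k * (x - c))))"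
      using key by (intro eventually_sequentiallyI[of 1]) simp
  qed
qed

end
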